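(* Let $d\ge1$, $N\ge1$, let $a:\mathbb{Z}^d\to\mathbb{R}$ define a symmetric, spatially homogeneous, irreducible random walk as in the context, let $x_1,\dots,x_N\in\mathbb{Z}^d$ be distinct points, and let $\beta\in\mathbb{R}$. A number $\lambda>0$ is an eigenvalue of the operator $\mathscr{H}_\beta=\mathscr{A}+\beta\sum_{i=1}^N\delta_{x_i}\delta_{x_i}^T$ on $l^2(\mathbb{Z}^d)$ if and only if $\gamma_i(\lambda)\beta=1$ for at least one $i\in\{0,\dots,N-1\}$, where $\gamma_0(\lambda),\dots,\gamma_{N-1}(\lambda)$ are the eigenvalues of the $N\times N$ matrix $\Gamma(\lambda)=[\Gamma_{ij}(\lambda)]$ with $\Gamma_{ij}(\lambda)=G_\lambda(x_i,x_j)$. Moreover, $\Gamma_{ij}(\lambda)>0$ for all $i,j$.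
   Context: $a:\mathbb{Z}^d\to\mathbb{R}$ satisfies $a(0)<0$, $a(z)\ge0$ for $z\ne0$, $a(z)=a(-z)$, $\sum_z a(z)=0$, and irreducibility: every $z\in\mathbb{Z}^d$ is a finite sum $z_1+\dots+z_k$ with $a(z_i)\ne0$. $(\mathscr{A}u)(x)=\sum_{x'}a(x-x')u(x')$; $\delta_x$ is the indicator vector of $x$, so $(\mathscr{H}_\beta u)(x)=(\mathscr{A}u)(x)+\beta\sum_i\mathbf{1}_{\{x=x_i\}}u(x_i)$. With $\phi(\theta)=\sum_z a(z)e^{i(\theta,z)}$, $\theta\in[-\pi,\pi]^d$, the Green function for $\lambda>0$ is $G_\lambda(x,y)=\int_0^\infty e^{-\lambda t}p(t,x,y)\,dt=\frac{1}{(2\pi)^d}\int_{[-\pi,\pi]^d}\frac{e^{i(\theta,y-x)}}{\lambda-\phi(\theta)}d\theta$, $p(t,x,y)$ being the transition probabilities of the continuous-time random walk with generator $\mathscr{A}$. *)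

theory Defs
  imports "HOL-Analysis.Analysis"
begin

text \<open>Lattice points of Z^d are modelled as int ^ 'd with 'd a finite (nonempty) type, d = CARD('d).\<close>

definition rw_kernel :: "(int ^ 'd \<Rightarrow> real) \<Rightarrow> bool" where
  "rw_kernel a \<longleftrightarrow>
     a 0 < 0 \<and>
     (\<forall>z. z \<noteq> 0 \<longrightarrow> a z \<ge> 0) \<and>
     (\<forall>z. a z = a (- z)) \<and>
     (a has_sum 0) UNIV \<and>
     (\<forall>z. \<exists>zs. (\<forall>w\<in>set zs. a w \<noteq> 0) \<and> sum_list zs = z)"

definition opA :: "(int ^ 'd \<Rightarrow> real) \<Rightarrow> (int ^ 'd \<Rightarrow> real) \<Rightarrow> int ^ 'd \<Rightarrow> real" where
  "opA a u x = (\<Sum>\<^sub>\<infinity>x'. a (x - x') * u x')"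

definition opH :: "(int ^ 'd \<Rightarrow> real) \<Rightarrow> real \<Rightarrow> ('n::finite \<Rightarrow> int ^ 'd) \<Rightarrow>
                   (int ^ 'd \<Rightarrow> real) \<Rightarrow> int ^ 'd \<Rightarrow> real" where
  "opH a \<beta> xs u x = opA a u x + \<beta> * (\<Sum>i\<in>UNIV. (if x = xs i then u (xs i) else 0))"

definition in_l2 :: "(int ^ 'd \<Rightarrow> real) \<Rightarrow> bool" where
  "in_l2 u \<longleftrightarrow> (\<lambda>x. (u x)\<^sup>2) summable_on UNIV"

definition is_l2_eigenvalue ::
  "((int ^ 'd \<Rightarrow> real) \<Rightarrow> int ^ 'd \<Rightarrow> real) \<Rightarrow> real \<Rightarrow> bool" where
  "is_l2_eigenvalue H lam \<longleftrightarrow> (\<exists>u. in_l2 u \<and> u \<noteq> (\<lambda>_. 0) \<and> (\<forall>x. H u x = lam * u x))"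

definition ipz :: "real ^ 'd \<Rightarrow> int ^ 'd \<Rightarrow> real" where
  "ipz \<theta> z = (\<Sum>k\<in>UNIV. \<theta> $ k * of_int (z $ k))"

definition symbol :: "(int ^ 'd \<Rightarrow> real) \<Rightarrow> real ^ 'd \<Rightarrow> complex" where
  "symbol a \<theta> = (\<Sum>\<^sub>\<infinity>z. complex_of_real (a z) * exp (\<i> * complex_of_real (ipz \<theta> z)))"

definition green :: "(int ^ 'd \<Rightarrow> real) \<Rightarrow> real \<Rightarrow> int ^ 'd \<Rightarrow> int ^ 'd \<Rightarrow> complex" where
  "green a lam x y =
     (1 / (2 * complex_of_real pi) ^ CARD('d)) *
     integral (cbox (\<chi> k. - pi) (\<chi> k. pi))
       (\<lambda>\<theta>::real ^ 'd. exp (\<i> * complex_of_real (ipz \<theta> (y - x))) / (complex_of_real lam - symbol a \<theta>))"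

definition Gamma_mat :: "(int ^ 'd \<Rightarrow> real) \<Rightarrow> real \<Rightarrow> ('n::finite \<Rightarrow> int ^ 'd) \<Rightarrow> complex ^ 'n ^ 'n" where
  "Gamma_mat a lam xs = (\<chi> i j. green a lam (xs i) (xs j))"

definition mat_eigenvalue :: "complex ^ 'n ^ 'n \<Rightarrow> complex \<Rightarrow> bool" where
  "mat_eigenvalue M \<gamma> \<longleftrightarrow> (\<exists>v. v \<noteq> 0 \<and> M *v v = \<gamma> *s v)"

end

theory Submission
  imports Defs
begin


definition ee :: "real ^ 'd \<Rightarrow> int ^ 'd \<Rightarrow> complex" where
  "ee \<theta> m = exp (\<i> * complex_of_real (ipz \<theta> m))"

lemma ipz_add: "ipz \<theta> (m + n) = ipz \<theta> m + ipz \<theta> n"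
  by (simp add: ipz_def distrib_left sum.distrib)
lemma ipz_minus: "ipz \<theta> (- m) = - ipz \<theta> m"
  by (simp add: ipz_def sum_negf)
lemma ipz_diff: "ipz \<theta> (m - n) = ipz \<theta> m - ipz \<theta> n"
  by (simp add: ipz_def algebra_simps sum_subtractf)
lemma ipz_zero[simp]: "ipz \<theta> 0 = 0"
  by (simp add: ipz_def)
lemma ipz_neg_theta: "ipz (- \<theta>) m = - ipz \<theta> m"
  by (simp add: ipz_def sum_negf)

lemma ee_add: "ee \<theta> (m + n) = ee \<theta> m * ee \<theta> n"
  by (simp add: ee_def ipz_add distrib_left exp_add)
lemma ee_zero[simp]: "ee \<theta> 0 = 1"
  by (simp add: ee_def)
lemma norm_ee[simp]: "norm (ee \<theta> m) = 1"
  by (simp add: ee_def)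
lemma cnj_ee: "cnj (ee \<theta> m) = ee \<theta> (- m)"
  by (simp add: ee_def ipz_minus exp_cnj)

lemma kernel_summable:
  assumes "rw_kernel a"
  shows "a summable_on UNIV" "(\<lambda>z. norm (a z)) summable_on UNIV" "infsum a UNIV = 0" "(a has_sum 0) UNIV"
proof -
  show h: "(a has_sum 0) UNIV" using assms unfolding rw_kernel_def by auto
  then show s: "a summable_on UNIV" by (auto simp: summable_on_def)
  then show "(\<lambda>z. norm (a z)) summable_on UNIV" using summable_on_iff_abs_summable_on_real by blast
  show "infsum a UNIV = 0" using h by (simp add: infsumI)
qed

lemma kernel_bdd_summable:
  fixes B :: "int ^ 'd \<Rightarrow> 'b::banach"
  assumes "rw_kernel a" "\<And>w. norm (B w) \<le> M"
  shows "(\<lambda>w. norm (a w *\<^sub>R B w)) summable_on UNIV" "(\<lambda>w. a w *\<^sub>R B w) summable_on UNIV"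
proof -
  have "(\<lambda>w. norm (M * a w)) summable_on UNIV"
    using kernel_summable(2)[OF assms(1)] by (simp add: abs_mult summable_on_cmult_right)
  then show 1: "(\<lambda>w. norm (a w *\<^sub>R B w)) summable_on UNIV"
    apply (rule summable_on_comparison_test)
    apply (auto simp: abs_mult)
    subgoal for x using mult_left_mono[OF order_trans[OF assms(2)[of x] abs_ge_self[of M]] abs_ge_zero[of "a x"]] by (simp add: mult.commute)
    done
  show "(\<lambda>w. a w *\<^sub>R B w) summable_on UNIV"
    by (rule Infinite_Sum.abs_summable_summable[OF 1])
qed




lemma symbol_has_sum:
  assumes "rw_kernel a"
  shows "((\<lambda>z. a z *\<^sub>R ee \<theta> z) has_sum symbol a \<theta>) UNIV"
proof -
  have "(\<lambda>z. a z *\<^sub>R ee \<theta> z) summable_on UNIV"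
    by (rule kernel_bdd_summable(2)[OF assms, of _ 1]) simp
  moreover have "symbol a \<theta> = (\<Sum>\<^sub>\<infinity>z. a z *\<^sub>R ee \<theta> z)"
    unfolding symbol_def ee_def by (simp add: scaleR_conv_of_real)
  ultimately show ?thesis by simp
qed

lemma Im_symbol:
  assumes "rw_kernel a"
  shows "Im (symbol a \<theta>) = 0"
proof -
  define f where "f z = a z * sin (ipz \<theta> z)" for z
  have h: "(f has_sum Im (symbol a \<theta>)) UNIV"
    unfolding f_def using has_sum_Im[OF symbol_has_sum[OF assms, of \<theta>]] by (simp add: ee_def Im_exp)
  have bij: "bij_betw uminus (UNIV :: (int^'d) set) UNIV"
    by (rule bij_betwI[where g=uminus]) auto
  have "((\<lambda>z. f (- z)) has_sum Im (symbol a \<theta>)) UNIV"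
    using has_sum_reindex_bij_betw[OF bij, where f=f] h by simp
  moreover have "f (- z) = - f z" for z
  proof -
    have "a (- z) = a z" using assms unfolding rw_kernel_def by metis
    then show ?thesis by (simp add: f_def ipz_minus)
  qed
  ultimately have A: "((\<lambda>z. - f z) has_sum Im (symbol a \<theta>)) UNIV" by simp
  have "(f has_sum - Im (symbol a \<theta>)) UNIV"
    using A has_sum_uminus[where f=f and a="Im (symbol a \<theta>)" and A=UNIV] by simp
  from has_sum_unique[OF h this] show ?thesis by simp
qed

lemma Re_symbol_has_sum:
  assumes "rw_kernel a"
  shows "((\<lambda>z. a z * cos (ipz \<theta> z)) has_sum Re (symbol a \<theta>)) UNIV"
  using has_sum_Re[OF symbol_has_sum[OF assms, of \<theta>]] by (simp add: ee_def Re_exp)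

lemma Re_symbol_le:
  assumes "rw_kernel a"
  shows "Re (symbol a \<theta>) \<le> 0"
proof -
  have "a z * cos (ipz \<theta> z) \<le> a z" for z
  proof (cases "z = 0")
    case True then show ?thesis by simp
  next
    case False
    then have "a z \<ge> 0" using assms unfolding rw_kernel_def by auto
    then show ?thesis using mult_left_le[of "cos (ipz \<theta> z)" "a z"] by simp
  qed
  then show ?thesis
    using has_sum_mono[OF Re_symbol_has_sum[OF assms] kernel_summable(4)[OF assms]] by auto
qed

lemma symbol_real:
  assumes "rw_kernel a"
  shows "symbol a \<theta> = complex_of_real (Re (symbol a \<theta>))"
  using Im_symbol[OF assms] by (simp add: complex_eq_iff)

lemma symbol_neg:
  assumes "rw_kernel a"
  shows "symbol a (- \<theta>) = symbol a \<theta>"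
proof -
  have "Re (symbol a (- \<theta>)) = Re (symbol a \<theta>)"
    using Re_symbol_has_sum[OF assms, of "-\<theta>"] Re_symbol_has_sum[OF assms, of \<theta>]
    by (simp add: ipz_neg_theta has_sum_unique)
  then show ?thesis using symbol_real[OF assms] by metis
qed

lemma lam_minus_symbol:
  assumes "rw_kernel a" "lam > 0"
  shows "Re (complex_of_real lam - symbol a \<theta>) \<ge> lam" "complex_of_real lam - symbol a \<theta> \<noteq> 0"
    "Im (complex_of_real lam - symbol a \<theta>) = 0"
  using Re_symbol_le[OF assms(1), of \<theta>] Im_symbol[OF assms(1), of \<theta>] assms(2)
  by (auto simp: complex_eq_iff)

lemma uniform_limit_infsum:
  fixes f :: "'i \<Rightarrow> 'x::topological_space \<Rightarrow> 'b::banach"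
  assumes M: "M summable_on UNIV" and bd: "\<And>i x. norm (f i x) \<le> M i"
  shows "uniform_limit S (\<lambda>F x. \<Sum>i\<in>F. f i x) (\<lambda>x. \<Sum>\<^sub>\<infinity>i. f i x) (finite_subsets_at_top UNIV)"
proof (rule uniform_limitI)
  fix e :: real assume e: "e > 0"
  have Mnn: "M i \<ge> 0" for i using bd[of i] norm_ge_zero order_trans by blast
  have fs: "(\<lambda>i. f i x) summable_on A" for x A
  proof -
    have "(\<lambda>i. norm (f i x)) summable_on UNIV"
      by (rule summable_on_comparison_test[OF M]) (auto simp: bd)
    then have "(\<lambda>i. f i x) summable_on UNIV"
      by (rule Infinite_Sum.abs_summable_summable)
    then show ?thesis by (rule summable_on_subset_banach) simp
  qed
  have Ms: "M summable_on A" for A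
    by (rule summable_on_subset_banach[OF M]) simp
  have "(sum M \<longlongrightarrow> infsum M UNIV) (finite_subsets_at_top UNIV)"
    using M has_sum_def summable_iff_has_sum_infsum by blast
  then have ev: "\<forall>\<^sub>F F in finite_subsets_at_top UNIV. dist (sum M F) (infsum M UNIV) < e"
    using e tendstoD by blast
  show "\<forall>\<^sub>F F in finite_subsets_at_top UNIV. \<forall>x\<in>S. dist (\<Sum>i\<in>F. f i x) (\<Sum>\<^sub>\<infinity>i. f i x) < e"
  proof -
    have "eventually (\<lambda>F. finite F) (finite_subsets_at_top (UNIV::'i set))"
      by (rule eventually_finite_subsets_at_top_weakI) simp
    then have ev2: "\<forall>\<^sub>F F in finite_subsets_at_top UNIV. finite F \<and> dist (sum M F) (infsum M UNIV) < e"
      using ev eventually_conj by blast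
    show ?thesis
    proof (rule eventually_mono[OF ev2])
    fix F assume F: "finite F \<and> dist (sum M F) (infsum M UNIV) < e"
    show "\<forall>x\<in>S. dist (\<Sum>i\<in>F. f i x) (\<Sum>\<^sub>\<infinity>i. f i x) < e"
    proof
      fix x assume "x \<in> S"
      have split: "(\<Sum>\<^sub>\<infinity>i. f i x) = (\<Sum>i\<in>F. f i x) + (\<Sum>\<^sub>\<infinity>i\<in>-F. f i x)"
        using infsum_Un_disjoint[OF fs fs, of F "-F"] F by (simp add: Un_commute)
      have splitM: "infsum M UNIV = sum M F + infsum M (-F)"
        using infsum_Un_disjoint[OF Ms Ms, of F "-F"] F by (simp add: Un_commute)
      have "norm (\<Sum>\<^sub>\<infinity>i\<in>-F. f i x) \<le> infsum M (-F)"
        by (rule norm_infsum_le[OF has_sum_infsum[OF fs] has_sum_infsum[OF Ms]]) (simp add: bd)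
      then show "dist (\<Sum>i\<in>F. f i x) (\<Sum>\<^sub>\<infinity>i. f i x) < e"
        using F split splitM by (simp add: dist_norm dist_real_def norm_minus_commute) (smt (verit) abs_ge_self)
    qed
  qed
  qed
qed




abbreviation box :: "(real ^ 'd) set" where
  "box \<equiv> cbox (\<chi> k. - pi) (\<chi> k. pi)"

lemma ipz_theta_add: "ipz (\<theta> + \<eta>) m = ipz \<theta> m + ipz \<eta> m"
  by (simp add: ipz_def distrib_right sum.distrib)

lemma ipz_axis: "ipz (t *\<^sub>R axis k 1) m = t * of_int (m $ k)"
proof -
  have "ipz (t *\<^sub>R axis k 1) m = (\<Sum>j\<in>UNIV. if j = k then t * of_int (m $ k) else 0)"
    unfolding ipz_def by (intro sum.cong) (auto simp: axis_def)
  then show ?thesis by simp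
qed

lemma continuous_ipz: "continuous_on S (\<lambda>\<theta>. ipz \<theta> m)"
  unfolding ipz_def by (intro continuous_intros)

lemma continuous_ee: "continuous_on S (\<lambda>\<theta>. ee \<theta> m)"
  unfolding ee_def by (intro continuous_intros continuous_on_of_real continuous_ipz)

definition lo :: "'d \<Rightarrow> real \<Rightarrow> real ^ 'd" where "lo k p = (\<chi> j. if j = k then p else - pi)"
definition hi :: "'d \<Rightarrow> real \<Rightarrow> real ^ 'd" where "hi k q = (\<chi> j. if j = k then q else pi)"

lemma Bx_split:
  fixes f :: "real ^ 'd \<Rightarrow> complex"
  assumes f: "continuous_on UNIV f" and "p \<le> r" "r \<le> q"
  shows "integral (cbox (lo k p) (hi k q)) f =
         integral (cbox (lo k p) (hi k r)) f + integral (cbox (lo k r) (hi k q)) f"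
proof -
  have k: "axis k (1::real) \<in> Basis" by (simp add: Basis_vec_def) blast
  have int: "f integrable_on cbox (lo k p) (hi k q)"
    by (rule integrable_continuous) (rule continuous_on_subset[OF f], simp)
  have e1: "cbox (lo k p) (hi k q) \<inter> {x. x \<bullet> axis k 1 \<le> r} = cbox (lo k p) (hi k r)"
    using assms by (auto simp: mem_box_cart lo_def hi_def inner_axis split: if_splits; metis order.trans)
  have e2: "cbox (lo k p) (hi k q) \<inter> {x. x \<bullet> axis k 1 \<ge> r} = cbox (lo k r) (hi k q)"
    using assms by (auto simp: mem_box_cart lo_def hi_def inner_axis split: if_splits; metis order.trans)
  show ?thesis using integral_split[OF int k, of r] e1 e2 by simp
qed

lemma Bx_translate:
  fixes f :: "real ^ 'd \<Rightarrow> complex"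
  assumes f: "continuous_on UNIV f"
  shows "integral (cbox (lo k (p + s)) (hi k (q + s))) f =
         integral (cbox (lo k p) (hi k q)) (\<lambda>x. f (x + s *\<^sub>R axis k 1))"
proof -
  have int: "f integrable_on cbox (lo k (p + s)) (hi k (q + s))"
    by (rule integrable_continuous) (rule continuous_on_subset[OF f], simp)
  then have hi: "(f has_integral integral (cbox (lo k (p + s)) (hi k (q + s))) f) (cbox (lo k (p + s)) (hi k (q + s)))"
    by (simp add: has_integral_integral)
  have "((\<lambda>x. f (1 *\<^sub>R x + s *\<^sub>R axis k 1)) has_integral (integral (cbox (lo k (p + s)) (hi k (q + s))) f /\<^sub>R 1 ^ DIM(real^'d)))
     (cbox ((lo k (p + s) - s *\<^sub>R axis k 1) /\<^sub>R 1) ((hi k (q + s) - s *\<^sub>R axis k 1) /\<^sub>R 1))"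
    by (rule has_integral_affinity'[OF hi]) simp
  moreover have "lo k (p + s) - s *\<^sub>R axis k 1 = lo k p" "hi k (q + s) - s *\<^sub>R axis k 1 = hi k q"
    by (auto simp: lo_def hi_def vec_eq_iff axis_def)
  ultimately have "((\<lambda>x. f (x + s *\<^sub>R axis k 1)) has_integral integral (cbox (lo k (p + s)) (hi k (q + s))) f) (cbox (lo k p) (hi k q))"
    by simp
  then show ?thesis by (simp add: integral_unique)
qed

lemma Bx_periodic:
  fixes f :: "real ^ 'd \<Rightarrow> complex"
  assumes f: "continuous_on UNIV f" and per: "\<And>x. f (x + (2 * pi) *\<^sub>R axis k 1) = f x"
    and t: "0 \<le> t" "t \<le> 2 * pi"
  shows "integral (cbox (lo k (- pi + t)) (hi k (pi + t))) f = integral (cbox (lo k (- pi)) (hi k pi)) f"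
proof -
  have "integral (cbox (lo k (- pi + t)) (hi k (pi + t))) f =
        integral (cbox (lo k (- pi + t)) (hi k pi)) f + integral (cbox (lo k pi) (hi k (pi + t))) f"
    by (rule Bx_split[OF f]) (use t in auto)
  also have "integral (cbox (lo k pi) (hi k (pi + t))) f = integral (cbox (lo k (- pi + 2 * pi)) (hi k ((- pi + t) + 2 * pi))) f"
    by (simp add: algebra_simps)
  also have "\<dots> = integral (cbox (lo k (- pi)) (hi k (- pi + t))) (\<lambda>x. f (x + (2 * pi) *\<^sub>R axis k 1))"
    by (rule Bx_translate[OF f])
  also have "\<dots> = integral (cbox (lo k (- pi)) (hi k (- pi + t))) f"
    by (simp add: per)
  also have "integral (cbox (lo k (- pi + t)) (hi k pi)) f + integral (cbox (lo k (- pi)) (hi k (- pi + t))) f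
      = integral (cbox (lo k (- pi)) (hi k pi)) f"
    using Bx_split[OF f, of "-pi" "-pi+t" pi k] t by simp
  finally show ?thesis .
qed

lemma box_eq_Bx: "box = cbox (lo k (- pi)) (hi k pi)"
  by (simp add: lo_def hi_def vec_eq_iff cong: if_cong)

lemma content_box: "measure lborel (box :: (real^'d) set) = (2 * pi) ^ CARD('d)"
proof -
  have "0 \<in> (box :: (real^'d) set)"
    by (simp add: mem_box_cart)
  then have "box \<noteq> ({} :: (real^'d) set)" by blast
  then show ?thesis by (simp add: content_cbox_cart)
qed

lemma orth:
  "((\<lambda>\<theta>. ee \<theta> m) has_integral (if m = 0 then complex_of_real ((2 * pi) ^ CARD('d)) else 0)) (box :: (real^'d) set)"
proof (cases "m = 0")
  case True
  then show ?thesis using has_integral_const[of "1::complex" "(\<chi> k. - pi) :: real^'d" "\<chi> k. pi"]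
    by (simp add: content_box scaleR_conv_of_real)
next
  case False
  then obtain k where mk: "m $ k \<noteq> 0" by (auto simp: vec_eq_iff)
  define t where "t = pi / \<bar>of_int (m $ k)\<bar>"
  have "\<bar>of_int (m $ k)\<bar> \<ge> (1::real)" using mk by linarith
  then have t0: "0 \<le> t" "t \<le> 2 * pi"
    unfolding t_def by (auto simp: divide_le_eq intro!: order_trans[of _ pi] mult_le_cancel_left_pos[THEN iffD2] )
  have tm: "t * of_int (m $ k) = pi \<or> t * of_int (m $ k) = - pi"
    unfolding t_def using mk by (auto simp: abs_if)
  define f where "f \<theta> = ee \<theta> m" for \<theta> :: "real ^ 'd"
  have fc: "continuous_on UNIV f" unfolding f_def by (rule continuous_ee)
  have shift: "f (x + s *\<^sub>R axis k 1) = f x * exp (\<i> * complex_of_real (s * of_int (m $ k)))" for x s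
    by (simp add: f_def ee_def ipz_theta_add ipz_axis distrib_left exp_add)
  have per: "f (x + (2 * pi) *\<^sub>R axis k 1) = f x" for x
  proof -
    have "exp (\<i> * complex_of_real (2 * pi * of_int (m $ k))) = 1"
      using exp_2pi_1_int[of "m $ k"] by (simp add: mult_ac)
    then show ?thesis using shift[of x "2*pi"] by simp
  qed
  define I where "I = integral (box :: (real^'d) set) f"
  have "I = integral (cbox (lo k (- pi + t)) (hi k (pi + t))) f"
    unfolding I_def box_eq_Bx[of k] by (rule Bx_periodic[OF fc per t0, symmetric])
  also have "\<dots> = integral (cbox (lo k (- pi)) (hi k pi)) (\<lambda>x. f (x + t *\<^sub>R axis k 1))"
    by (rule Bx_translate[OF fc])
  also have "\<dots> = integral (cbox (lo k (- pi)) (hi k pi)) (\<lambda>x. f x * (-1))"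
  proof -
    have "exp (\<i> * complex_of_real (t * of_int (m $ k))) = -1"
      using tm by (auto simp: exp_eq_polar complex_eq_iff)
    then show ?thesis by (simp add: shift)
  qed
  also have "\<dots> = - I"
    unfolding I_def box_eq_Bx[of k] by (simp add: integral_neg)
  finally have "I = 0" by simp
  moreover have "f integrable_on box"
    by (rule integrable_continuous) (rule continuous_on_subset[OF fc], simp)
  ultimately have "(f has_integral 0) box"
    unfolding I_def using has_integral_integral by metis
  then show ?thesis using False unfolding f_def by simp
qed




lemma continuous_symbol:
  assumes "rw_kernel a"
  shows "continuous_on UNIV (symbol a)"
proof -
  have ul: "uniform_limit UNIV (\<lambda>F \<theta>. \<Sum>z\<in>F. a z *\<^sub>R ee \<theta> z) (\<lambda>\<theta>. \<Sum>\<^sub>\<infinity>z. a z *\<^sub>R ee \<theta> z) (finite_subsets_at_top UNIV)"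
    by (rule uniform_limit_infsum[OF kernel_summable(2)[OF assms]]) simp
  have "continuous_on UNIV (\<lambda>\<theta>. \<Sum>\<^sub>\<infinity>z. a z *\<^sub>R ee \<theta> z)"
    by (rule uniform_limit_theorem[OF _ ul])
       (auto intro!: always_eventually continuous_intros continuous_ee simp: finite_subsets_at_top_neq_bot)
  moreover have "(\<lambda>\<theta>. \<Sum>\<^sub>\<infinity>z. a z *\<^sub>R ee \<theta> z) = symbol a"
    using symbol_has_sum[OF assms] by (auto simp: fun_eq_iff infsumI)
  ultimately show ?thesis by metis
qed

lemma continuous_integrand:
  assumes "rw_kernel a" "lam > 0"
  shows "continuous_on S (\<lambda>\<theta>. ee \<theta> m / (complex_of_real lam - symbol a \<theta>))"
  by (intro continuous_intros continuous_ee continuous_on_subset[OF continuous_symbol[OF assms(1)]])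
     (use lam_minus_symbol[OF assms] in auto)

lemma norm_inv_le:
  assumes "rw_kernel a" "lam > 0"
  shows "norm (1 / (complex_of_real lam - symbol a \<theta>)) \<le> 1 / lam"
proof -
  have "lam \<le> Re (complex_of_real lam - symbol a \<theta>)" by (rule lam_minus_symbol(1)[OF assms])
  also have "\<dots> \<le> norm (complex_of_real lam - symbol a \<theta>)" by (rule complex_Re_le_cmod)
  finally have "lam \<le> norm (complex_of_real lam - symbol a \<theta>)" .
  moreover have "0 < norm (complex_of_real lam - symbol a \<theta>)" using assms(2) calculation by linarith
  ultimately have "1 / norm (complex_of_real lam - symbol a \<theta>) \<le> 1 / lam"
    using assms(2) by (intro divide_left_mono) auto
  then show ?thesis by (simp add: norm_divide)
qed

lemma infsum_integral_swap:
  fixes F :: "'i \<Rightarrow> real ^ 'd \<Rightarrow> complex"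
  assumes cont: "\<And>i. continuous_on box (F i)" and bd: "\<And>i \<theta>. norm (F i \<theta>) \<le> M i"
    and M: "M summable_on UNIV"
  shows "((\<lambda>i. integral box (F i)) has_sum integral box (\<lambda>\<theta>. \<Sum>\<^sub>\<infinity>i. F i \<theta>)) UNIV"
proof -
  have ul: "uniform_limit box (\<lambda>S \<theta>. \<Sum>i\<in>S. F i \<theta>) (\<lambda>\<theta>. \<Sum>\<^sub>\<infinity>i. F i \<theta>) (finite_subsets_at_top UNIV)"
    by (rule uniform_limit_infsum[OF M bd])
  obtain I J where I: "\<And>S. ((\<lambda>\<theta>. \<Sum>i\<in>S. F i \<theta>) has_integral I S) box"
    and J: "((\<lambda>\<theta>. \<Sum>\<^sub>\<infinity>i. F i \<theta>) has_integral J) box" and lim: "(I \<longlongrightarrow> J) (finite_subsets_at_top UNIV)"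
    by (rule uniform_limit_integral_cbox[OF ul]) (auto intro!: continuous_intros cont simp: finite_subsets_at_top_neq_bot)
  have "\<forall>\<^sub>F S in finite_subsets_at_top UNIV. I S = (\<Sum>i\<in>S. integral box (F i))"
  proof (rule eventually_finite_subsets_at_top_weakI)
    fix S :: "'i set" assume "finite S"
    then show "I S = (\<Sum>i\<in>S. integral box (F i))"
      using integral_sum[of S F box] I[of S] cont by (simp add: integrable_continuous integral_unique)
  qed
  then have "((\<lambda>S. \<Sum>i\<in>S. integral box (F i)) \<longlongrightarrow> J) (finite_subsets_at_top UNIV)"
    using lim tendsto_cong by fastforce
  then show ?thesis using J by (simp add: has_sum_def integral_unique)
qed

definition Gi :: "(int ^ 'd \<Rightarrow> real) \<Rightarrow> real \<Rightarrow> int ^ 'd \<Rightarrow> complex" where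
  "Gi a lam m = integral box (\<lambda>\<theta>. ee \<theta> m / (complex_of_real lam - symbol a \<theta>))"

lemma green_Gi:
  fixes a :: "int ^ 'd \<Rightarrow> real"
  shows "green a lam x y = (1 / (2 * complex_of_real pi) ^ CARD('d)) * Gi a lam (y - x)"
  unfolding green_def Gi_def ee_def by simp

lemma Gi_resolvent:
  fixes a :: "int ^ 'd \<Rightarrow> real"
  assumes "rw_kernel a" "lam > 0"
  shows "((\<lambda>w. a w *\<^sub>R Gi a lam (m + w)) has_sum
     (complex_of_real lam * Gi a lam m - (if m = 0 then complex_of_real ((2 * pi) ^ CARD('d)) else 0))) UNIV"
proof -
  define h where "h \<theta> = ee \<theta> m / (complex_of_real lam - symbol a \<theta>)" for \<theta> :: "real^'d"
  define F where "F w \<theta> = a w *\<^sub>R (ee \<theta> (m + w) / (complex_of_real lam - symbol a \<theta>))" for w \<theta>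
  have F_eq: "F w \<theta> = h \<theta> * (a w *\<^sub>R ee \<theta> w)" for w \<theta>
    by (simp add: F_def h_def ee_add)
  have contF: "continuous_on box (F w)" for w
    unfolding F_def by (intro continuous_intros continuous_integrand[OF assms])
  have bdF: "norm (F w \<theta>) \<le> \<bar>a w\<bar> * (1 / lam)" for w \<theta>
  proof -
    have "norm (F w \<theta>) = \<bar>a w\<bar> * norm (1 / (complex_of_real lam - symbol a \<theta>))"
      by (simp add: F_def norm_divide)
    also have "\<dots> \<le> \<bar>a w\<bar> * (1 / lam)"
      by (rule mult_left_mono[OF norm_inv_le[OF assms]]) simp
    finally show ?thesis .
  qed
  have M: "(\<lambda>w. \<bar>a w\<bar> * (1 / lam)) summable_on UNIV"
    using summable_on_cmult_left[OF kernel_summable(2)[OF assms(1)], of "1/lam"] by simp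
  have sw: "((\<lambda>w. integral box (F w)) has_sum integral box (\<lambda>\<theta>. \<Sum>\<^sub>\<infinity>w. F w \<theta>)) UNIV"
    by (rule infsum_integral_swap[OF contF bdF M])
  have "(\<lambda>\<theta>. \<Sum>\<^sub>\<infinity>w. F w \<theta>) = (\<lambda>\<theta>. h \<theta> * symbol a \<theta>)"
    unfolding F_eq using has_sum_cmult_right[OF symbol_has_sum[OF assms(1)]] by (auto intro!: infsumI)
  moreover have "integral box (F w) = a w *\<^sub>R Gi a lam (m + w)" for w
    unfolding F_def Gi_def by simp
  ultimately have sw2: "((\<lambda>w. a w *\<^sub>R Gi a lam (m + w)) has_sum integral box (\<lambda>\<theta>. h \<theta> * symbol a \<theta>)) UNIV"
    using sw by simp
  have hi: "h integrable_on box" unfolding h_def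
    by (rule integrable_continuous) (rule continuous_integrand[OF assms])
  have hsi: "(\<lambda>\<theta>. h \<theta> * symbol a \<theta>) integrable_on box"
    by (rule integrable_continuous) (unfold h_def, intro continuous_intros continuous_integrand[OF assms] continuous_on_subset[OF continuous_symbol[OF assms(1)]], simp)
  have "complex_of_real lam * Gi a lam m - integral box (\<lambda>\<theta>. h \<theta> * symbol a \<theta>)
      = integral box (\<lambda>\<theta>. complex_of_real lam * h \<theta> - h \<theta> * symbol a \<theta>)"
    unfolding Gi_def h_def[symmetric]
    by (subst integral_diff) (auto intro: hi hsi integrable_on_mult_right)
  also have "\<dots> = integral box (\<lambda>\<theta>. ee \<theta> m)"
  proof (rule integral_cong)
    fix \<theta> :: "real^'d"
    have "complex_of_real lam - symbol a \<theta> \<noteq> 0" by (rule lam_minus_symbol(2)[OF assms])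
    have "complex_of_real lam * h \<theta> - h \<theta> * symbol a \<theta> = h \<theta> * (complex_of_real lam - symbol a \<theta>)"
      by (simp add: algebra_simps)
    then show "complex_of_real lam * h \<theta> - h \<theta> * symbol a \<theta> = ee \<theta> m"
      using \<open>complex_of_real lam - symbol a \<theta> \<noteq> 0\<close> unfolding h_def by simp
  qed
  also have "\<dots> = (if m = 0 then complex_of_real ((2 * pi) ^ CARD('d)) else 0)"
    using orth[of m] by (simp add: integral_unique)
  finally have "integral box (\<lambda>\<theta>. h \<theta> * symbol a \<theta>) = complex_of_real lam * Gi a lam m - (if m = 0 then complex_of_real ((2 * pi) ^ CARD('d)) else 0)"
    by (simp add: algebra_simps)
  then show ?thesis using sw2 by simp
qed

lemma Gi_real:
  fixes a :: "int ^ 'd \<Rightarrow> real"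
  assumes "rw_kernel a" "lam > 0"
  shows "cnj (Gi a lam m) = Gi a lam m"
proof -
  have "cnj (Gi a lam m) = integral box (\<lambda>\<theta>. cnj (ee \<theta> m / (complex_of_real lam - symbol a \<theta>)))"
    unfolding Gi_def by (simp add: integral_cnj)
  also have "\<dots> = integral box (\<lambda>\<theta>. ee (- \<theta>) m / (complex_of_real lam - symbol a (- \<theta>)))"
  proof (rule integral_cong)
    fix \<theta> :: "real^'d"
    have "cnj (symbol a \<theta>) = symbol a \<theta>"
      using symbol_real[OF assms(1), of \<theta>] by (metis complex_cnj_complex_of_real)
    then show "cnj (ee \<theta> m / (complex_of_real lam - symbol a \<theta>)) = ee (- \<theta>) m / (complex_of_real lam - symbol a (- \<theta>))"
      by (simp add: symbol_neg[OF assms(1)] ee_def ipz_minus ipz_neg_theta exp_cnj)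
  qed
  also have "\<dots> = Gi a lam m"
  proof -
    have int: "(\<lambda>\<theta>. ee \<theta> m / (complex_of_real lam - symbol a \<theta>)) integrable_on box"
      by (rule integrable_continuous) (rule continuous_integrand[OF assms])
    define f where "f \<theta> = ee \<theta> m / (complex_of_real lam - symbol a \<theta>)" for \<theta> :: "real^'d"
    have e: "- (\<chi> k. pi) = ((\<chi> k. - pi) :: real^'d)" "- (\<chi> k. - pi) = ((\<chi> k. pi) :: real^'d)"
      by (auto simp: vec_eq_iff)
    have "(f has_integral integral box f) box"
      using int unfolding f_def by (simp add: has_integral_integral[symmetric] integrable_integral)
    then have "((\<lambda>x. f (- x)) has_integral integral box f) (cbox (- (\<chi> k. pi)) (- (\<chi> k. - pi)))"
      by (rule has_integral_reflect_lemma)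
    then have "((\<lambda>x. f (- x)) has_integral integral box f) box"
      by (simp only: e)
    then show ?thesis unfolding Gi_def f_def by (rule integral_unique)
  qed
  finally show ?thesis .
qed

lemma Gi_bound:
  fixes a :: "int ^ 'd \<Rightarrow> real"
  assumes "rw_kernel a" "lam > 0"
  shows "norm (Gi a lam m) \<le> (1 / lam) * (2 * pi) ^ CARD('d)"
proof -
  have int: "(\<lambda>\<theta>. ee \<theta> m / (complex_of_real lam - symbol a \<theta>)) integrable_on box"
    by (rule integrable_continuous) (rule continuous_integrand[OF assms])
  have "norm (Gi a lam m) \<le> (1 / lam) * measure lborel (box :: (real^'d) set)"
    unfolding Gi_def
  proof (rule has_integral_bound[OF _ integrable_integral[OF int]])
    show "0 \<le> 1 / lam" using assms by simp
    fix \<theta> :: "real^'d"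
    show "norm (ee \<theta> m / (complex_of_real lam - symbol a \<theta>)) \<le> 1 / lam"
      using norm_inv_le[OF assms, of \<theta>] by (simp add: norm_divide)
  qed
  moreover have "measure lborel (box :: (real^'d) set) = (2 * pi) ^ CARD('d)" by (rule content_box)
  ultimately show ?thesis by (simp only:)
qed




definition gr :: "(int ^ 'd \<Rightarrow> real) \<Rightarrow> real \<Rightarrow> int ^ 'd \<Rightarrow> int ^ 'd \<Rightarrow> real" where
  "gr a lam y x = Re (green a lam x y)"

definition Gr :: "(int ^ 'd \<Rightarrow> real) \<Rightarrow> real \<Rightarrow> int ^ 'd \<Rightarrow> real" where
  "Gr a lam m = Re (Gi a lam m)"

lemma Gi_Gr:
  fixes a :: "int ^ 'd \<Rightarrow> real"
  assumes "rw_kernel a" "lam > 0"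
  shows "Gi a lam m = complex_of_real (Gr a lam m)"
proof -
  have "Im (Gi a lam m) = 0"
    using Gi_real[OF assms, of m] by (metis complex_cnj_complex_of_real Reals_cnj_iff complex_is_Real_iff)
  then show ?thesis by (simp add: Gr_def complex_eq_iff)
qed

lemma green_Gr:
  fixes a :: "int ^ 'd \<Rightarrow> real"
  assumes "rw_kernel a" "lam > 0"
  shows "green a lam x y = complex_of_real ((1 / (2 * pi) ^ CARD('d)) * Gr a lam (y - x))"
  unfolding green_Gi Gi_Gr[OF assms] by simp

lemma gr_Gr:
  fixes a :: "int ^ 'd \<Rightarrow> real"
  assumes "rw_kernel a" "lam > 0"
  shows "gr a lam y x = (1 / (2 * pi) ^ CARD('d)) * Gr a lam (y - x)"
  unfolding gr_def green_Gr[OF assms] by simp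

lemma green_gr:
  fixes a :: "int ^ 'd \<Rightarrow> real"
  assumes "rw_kernel a" "lam > 0"
  shows "green a lam x y = complex_of_real (gr a lam y x)"
  unfolding green_Gr[OF assms] gr_Gr[OF assms] ..

lemma gr_bound:
  fixes a :: "int ^ 'd \<Rightarrow> real"
  assumes "rw_kernel a" "lam > 0"
  shows "\<bar>gr a lam y x\<bar> \<le> 1 / lam"
proof -
  have "\<bar>Gr a lam (y - x)\<bar> \<le> (1 / lam) * (2 * pi) ^ CARD('d)"
    using Gi_bound[OF assms, of "y - x"] Gi_Gr[OF assms, of "y - x"] by simp
  then have "(1 / (2 * pi) ^ CARD('d)) * \<bar>Gr a lam (y - x)\<bar> \<le> (1 / (2 * pi) ^ CARD('d)) * ((1 / lam) * (2 * pi) ^ CARD('d))"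
    by (rule mult_left_mono) simp
  then show ?thesis using assms(2) by (simp add: gr_Gr[OF assms] abs_mult)
qed

lemma gr_resolvent:
  fixes a :: "int ^ 'd \<Rightarrow> real"
  assumes "rw_kernel a" "lam > 0"
  shows "((\<lambda>w. a w * gr a lam y (x - w)) has_sum (lam * gr a lam y x - (if x = y then 1 else 0))) UNIV"
proof -
  define k :: real where "k = 1 / (2 * pi) ^ CARD('d)"
  have kp: "k * (2 * pi) ^ CARD('d) = 1" unfolding k_def by simp
  have "((\<lambda>w. Re (a w *\<^sub>R Gi a lam ((y - x) + w))) has_sum
     Re (complex_of_real lam * Gi a lam (y - x) - (if y - x = 0 then complex_of_real ((2 * pi) ^ CARD('d)) else 0))) UNIV"
    by (rule has_sum_Re[OF Gi_resolvent[OF assms]])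
  then have "((\<lambda>w. a w * Gr a lam ((y - x) + w)) has_sum
     (lam * Gr a lam (y - x) - (if x = y then (2 * pi) ^ CARD('d) else 0))) UNIV"
    by (simp add: Gi_Gr[OF assms] if_distrib cong: if_cong)
  from has_sum_cmult_right[OF this, of k]
  have "((\<lambda>w. k * (a w * Gr a lam ((y - x) + w))) has_sum
     (k * (lam * Gr a lam (y - x) - (if x = y then (2 * pi) ^ CARD('d) else 0)))) UNIV" .
  moreover have "k * (a w * Gr a lam ((y - x) + w)) = a w * gr a lam y (x - w)" for w
    by (simp add: gr_Gr[OF assms] k_def algebra_simps)
  moreover have "k * (lam * Gr a lam (y - x) - (if x = y then (2 * pi) ^ CARD('d) else 0)) = lam * gr a lam y x - (if x = y then 1 else 0)"
    using kp by (simp add: gr_Gr[OF assms] k_def algebra_simps)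
  ultimately show ?thesis by simp
qed




lemma continuous_hh:
  assumes "rw_kernel a" "lam > 0"
  shows "continuous_on S (\<lambda>\<theta>. 1 / (complex_of_real lam - symbol a \<theta>))"
  by (intro continuous_intros continuous_on_subset[OF continuous_symbol[OF assms(1)]])
     (use lam_minus_symbol[OF assms] in auto)

lemma bessel_finite:
  fixes a :: "int ^ 'd \<Rightarrow> real"
  assumes ker: "rw_kernel a" and lam: "lam > 0" and F: "finite F"
  shows "(\<Sum>x\<in>F. (gr a lam y x)\<^sup>2) \<le> 1 / lam\<^sup>2"
proof -
  define k :: real where "k = 1 / (2 * pi) ^ CARD('d)"
  define P :: real where "P = (2 * pi) ^ CARD('d)"
  have kP: "k * P = 1" "P > 0" unfolding k_def P_def by auto
  define g where "g x = gr a lam y x" for x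
  define hh where "hh \<theta> = 1 / (complex_of_real lam - symbol a \<theta>)" for \<theta> :: "real^'d"
  define S where "S \<theta> = (\<Sum>x\<in>F. complex_of_real (g x) * ee \<theta> (y - x))" for \<theta> :: "real^'d"
  have hhc: "continuous_on box hh" unfolding hh_def by (rule continuous_hh[OF ker lam])
  have Sc: "continuous_on box S" unfolding S_def by (intro continuous_intros continuous_ee)
  have gx: "complex_of_real (g x) = complex_of_real k * integral box (\<lambda>\<theta>. ee \<theta> (y - x) * hh \<theta>)" for x
    unfolding g_def green_gr[OF ker lam, symmetric] green_Gi Gi_def hh_def k_def by simp
  have "complex_of_real (\<Sum>x\<in>F. (g x)\<^sup>2) = (\<Sum>x\<in>F. complex_of_real (g x) * complex_of_real (g x))"
    by (simp add: power2_eq_square)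
  also have "\<dots> = (\<Sum>x\<in>F. complex_of_real k * integral box (\<lambda>\<theta>. complex_of_real (g x) * ee \<theta> (y - x) * hh \<theta>))"
  proof (intro sum.cong refl)
    fix x
    have "complex_of_real k * integral box (\<lambda>\<theta>. complex_of_real (g x) * ee \<theta> (y - x) * hh \<theta>)
       = complex_of_real k * integral box (\<lambda>\<theta>. complex_of_real (g x) * (ee \<theta> (y - x) * hh \<theta>))"
      by (simp only: mult.assoc)
    also have "\<dots> = complex_of_real k * (complex_of_real (g x) * integral box (\<lambda>\<theta>. ee \<theta> (y - x) * hh \<theta>))"
      by (simp only: integral_mult_right)
    also have "\<dots> = complex_of_real (g x) * complex_of_real (g x)"
      by (simp only: gx mult_ac)
    finally show "complex_of_real (g x) * complex_of_real (g x) = complex_of_real k * integral box (\<lambda>\<theta>. complex_of_real (g x) * ee \<theta> (y - x) * hh \<theta>)" by simp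
  qed
  also have "\<dots> = complex_of_real k * integral box (\<lambda>\<theta>. \<Sum>x\<in>F. complex_of_real (g x) * ee \<theta> (y - x) * hh \<theta>)"
    by (subst integral_sum[OF F]) (auto simp: sum_distrib_left intro!: integrable_continuous continuous_intros continuous_ee hhc)
  also have "\<dots> = complex_of_real k * integral box (\<lambda>\<theta>. S \<theta> * hh \<theta>)"
    by (simp add: S_def sum_distrib_right)
  finally have eq1: "complex_of_real (\<Sum>x\<in>F. (g x)\<^sup>2) = complex_of_real k * integral box (\<lambda>\<theta>. S \<theta> * hh \<theta>)" .
  have Shi: "(\<lambda>\<theta>. S \<theta> * hh \<theta>) integrable_on box"
    by (intro integrable_continuous continuous_intros Sc hhc)
  have eq2: "(\<Sum>x\<in>F. (g x)\<^sup>2) = k * integral box (\<lambda>\<theta>. Re (S \<theta> * hh \<theta>))"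
  proof -
    have "Re (integral box (\<lambda>\<theta>. S \<theta> * hh \<theta>)) = integral box (\<lambda>\<theta>. Re (S \<theta> * hh \<theta>))"
      using integral_linear[OF Shi bounded_linear_Re] by (simp add: o_def)
    then show ?thesis using arg_cong[OF eq1, of Re] by simp
  qed
  have pw: "Re (S \<theta> * hh \<theta>) \<le> (norm (S \<theta>))\<^sup>2 / 2 + (norm (hh \<theta>))\<^sup>2 / 2" for \<theta>
  proof -
    have "Re (S \<theta> * hh \<theta>) \<le> norm (S \<theta> * hh \<theta>)" by (rule complex_Re_le_cmod)
    also have "\<dots> = norm (S \<theta>) * norm (hh \<theta>)" by (simp add: norm_mult)
    also have "\<dots> \<le> (norm (S \<theta>))\<^sup>2 / 2 + (norm (hh \<theta>))\<^sup>2 / 2"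
      using sum_squares_ge_zero[of "norm (S \<theta>) - norm (hh \<theta>)" 0]
      by (simp add: power2_eq_square algebra_simps)
    finally show ?thesis .
  qed
  have SS: "S \<theta> * cnj (S \<theta>) = (\<Sum>x\<in>F. \<Sum>x'\<in>F. complex_of_real (g x * g x') * ee \<theta> (x' - x))" for \<theta>
  proof -
    have "cnj (S \<theta>) = (\<Sum>x'\<in>F. complex_of_real (g x') * ee \<theta> (x' - y))"
      unfolding S_def by (simp add: cnj_ee)
    then have "S \<theta> * cnj (S \<theta>) = (\<Sum>x\<in>F. \<Sum>x'\<in>F. (complex_of_real (g x) * ee \<theta> (y - x)) * (complex_of_real (g x') * ee \<theta> (x' - y)))"
      unfolding S_def by (simp add: sum_product)
    also have "\<dots> = (\<Sum>x\<in>F. \<Sum>x'\<in>F. complex_of_real (g x * g x') * ee \<theta> (x' - x))"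
    proof (intro sum.cong refl)
      fix x x'
      have "ee \<theta> (y - x) * ee \<theta> (x' - y) = ee \<theta> (x' - x)"
        using ee_add[of \<theta> "y - x" "x' - y"] by (simp add: algebra_simps)
      then show "(complex_of_real (g x) * ee \<theta> (y - x)) * (complex_of_real (g x') * ee \<theta> (x' - y)) =
            complex_of_real (g x * g x') * ee \<theta> (x' - x)"
        by (simp add: mult_ac)
    qed
    finally show ?thesis .
  qed
  have intSS: "integral box (\<lambda>\<theta>. S \<theta> * cnj (S \<theta>)) = complex_of_real (P * (\<Sum>x\<in>F. (g x)\<^sup>2))"
  proof -
    have ie: "integral box (\<lambda>\<theta>. ee \<theta> m) = (if m = 0 then complex_of_real P else 0)" for m :: "int^'d"
      using orth[of m] unfolding P_def by (simp add: integral_unique)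
    have "integral box (\<lambda>\<theta>. S \<theta> * cnj (S \<theta>)) =
       (\<Sum>x\<in>F. \<Sum>x'\<in>F. complex_of_real (g x * g x') * integral box (\<lambda>\<theta>. ee \<theta> (x' - x)))"
      unfolding SS
      by (subst integral_sum[OF F], force intro!: integrable_sum integrable_continuous continuous_intros continuous_ee F)
         (intro sum.cong refl, subst integral_sum[OF F], auto intro!: integrable_continuous continuous_intros continuous_ee)
    also have "\<dots> = (\<Sum>x\<in>F. complex_of_real (g x * g x) * complex_of_real P)"
      by (intro sum.cong refl) (simp add: ie if_distrib F cong: if_cong)
    also have "\<dots> = complex_of_real (P * (\<Sum>x\<in>F. (g x)\<^sup>2))"
      by (simp add: sum_distrib_left power2_eq_square mult_ac)
    finally show ?thesis .
  qed
  have nS: "(norm (S \<theta>))\<^sup>2 = Re (S \<theta> * cnj (S \<theta>))" for \<theta>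
    by (simp add: complex_mult_cnj cmod_power2)
  have SSi: "(\<lambda>\<theta>. S \<theta> * cnj (S \<theta>)) integrable_on box"
    by (intro integrable_continuous continuous_intros Sc)
  have int_nS: "integral box (\<lambda>\<theta>. (norm (S \<theta>))\<^sup>2) = P * (\<Sum>x\<in>F. (g x)\<^sup>2)"
  proof -
    have "integral box (\<lambda>\<theta>. (norm (S \<theta>))\<^sup>2) = Re (integral box (\<lambda>\<theta>. S \<theta> * cnj (S \<theta>)))"
      unfolding nS using integral_linear[OF SSi bounded_linear_Re] by (simp add: o_def)
    then show ?thesis using intSS by simp
  qed
  have int_nh: "integral box (\<lambda>\<theta>. (norm (hh \<theta>))\<^sup>2) \<le> P * (1 / lam)\<^sup>2"
  proof -
    have "integral box (\<lambda>\<theta>. (norm (hh \<theta>))\<^sup>2) \<le> integral box (\<lambda>\<theta>::real^'d. (1 / lam)\<^sup>2)"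
    proof (rule integral_le)
      show "(\<lambda>\<theta>. (norm (hh \<theta>))\<^sup>2) integrable_on box"
        by (intro integrable_continuous continuous_intros hhc)
      show "(\<lambda>\<theta>::real^'d. (1 / lam)\<^sup>2) integrable_on box" by (rule integrable_const)
      fix \<theta> :: "real^'d"
      show "(norm (hh \<theta>))\<^sup>2 \<le> (1 / lam)\<^sup>2"
        using norm_inv_le[OF ker lam, of \<theta>] unfolding hh_def by (intro power_mono) auto
    qed
    also have "\<dots> = P * (1 / lam)\<^sup>2"
      using content_box[where 'd='d] unfolding P_def by simp
    finally show ?thesis .
  qed
  have "integral box (\<lambda>\<theta>. Re (S \<theta> * hh \<theta>)) \<le> integral box (\<lambda>\<theta>. (norm (S \<theta>))\<^sup>2 / 2 + (norm (hh \<theta>))\<^sup>2 / 2)"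
    apply (rule integral_le) apply (auto intro!: integrable_continuous continuous_intros Sc hhc)[2] by (rule pw)
  also have "\<dots> = integral box (\<lambda>\<theta>. (norm (S \<theta>))\<^sup>2) / 2 + integral box (\<lambda>\<theta>. (norm (hh \<theta>))\<^sup>2) / 2"
    by (subst integral_add) (auto intro!: integrable_continuous continuous_intros Sc hhc)
  finally have "integral box (\<lambda>\<theta>. Re (S \<theta> * hh \<theta>)) \<le> P * (\<Sum>x\<in>F. (g x)\<^sup>2) / 2 + P * (1 / lam)\<^sup>2 / 2"
    using int_nS int_nh by linarith
  then have "k * integral box (\<lambda>\<theta>. Re (S \<theta> * hh \<theta>)) \<le> k * (P * (\<Sum>x\<in>F. (g x)\<^sup>2) / 2 + P * (1 / lam)\<^sup>2 / 2)"
    by (rule mult_left_mono) (simp add: k_def)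
  also have "\<dots> = (k * P) * (\<Sum>x\<in>F. (g x)\<^sup>2) / 2 + (k * P) * (1 / lam)\<^sup>2 / 2"
    by (simp only: distrib_left times_divide_eq_right mult.assoc)
  also have "\<dots> = (\<Sum>x\<in>F. (g x)\<^sup>2) / 2 + (1 / lam)\<^sup>2 / 2"
    by (simp only: kP(1) mult_1)
  finally have "(\<Sum>x\<in>F. (g x)\<^sup>2) \<le> (\<Sum>x\<in>F. (g x)\<^sup>2) / 2 + (1 / lam)\<^sup>2 / 2"
    using eq2 by simp
  then show ?thesis unfolding g_def by (simp add: power_divide)
qed

lemma gr_l2:
  fixes a :: "int ^ 'd \<Rightarrow> real"
  assumes ker: "rw_kernel a" and lam: "lam > 0"
  shows "in_l2 (gr a lam y)"
  unfolding in_l2_def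
  by (rule nonneg_bdd_above_summable_on)
     (auto intro!: bdd_aboveI2[where M="1 / lam\<^sup>2"] bessel_finite[OF ker lam])




definition bdd :: "(int ^ 'd \<Rightarrow> real) \<Rightarrow> bool" where
  "bdd u \<longleftrightarrow> (\<exists>M. \<forall>x. \<bar>u x\<bar> \<le> M)"

lemma opA_reindex:
  fixes a :: "int ^ 'd \<Rightarrow> real"
  shows "opA a u x = (\<Sum>\<^sub>\<infinity>w. a w * u (x - w))"
proof -
  have bij: "bij_betw (\<lambda>w. x - w) (UNIV :: (int^'d) set) UNIV"
    by (rule bij_betwI[where g="\<lambda>w. x - w"]) auto
  show ?thesis unfolding opA_def
    using infsum_reindex_bij_betw[OF bij, where f="\<lambda>x'. a (x - x') * u x'"] by simp
qed

lemma conv_summable: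
  assumes "rw_kernel a" "bdd u"
  shows "(\<lambda>w. a w * u (x - w)) summable_on UNIV"
proof -
  obtain M where M: "\<And>x. \<bar>u x\<bar> \<le> M" using assms(2) unfolding bdd_def by blast
  show ?thesis using kernel_bdd_summable(2)[OF assms(1), of "\<lambda>w. u (x - w)" M] M by simp
qed

lemma opA_has_sum:
  assumes "rw_kernel a" "bdd u"
  shows "((\<lambda>w. a w * u (x - w)) has_sum opA a u x) UNIV"
  using conv_summable[OF assms] by (simp add: opA_reindex)

lemma bdd_add: "bdd u \<Longrightarrow> bdd v \<Longrightarrow> bdd (\<lambda>x. u x + v x)"
  unfolding bdd_def by (metis abs_triangle_ineq add_mono order_trans)

lemma bdd_scale: "bdd u \<Longrightarrow> bdd (\<lambda>x. c * u x)"
  unfolding bdd_def by (metis abs_ge_zero abs_mult mult_left_mono)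

lemma bdd_sum: "finite I \<Longrightarrow> (\<And>i. i \<in> I \<Longrightarrow> bdd (f i)) \<Longrightarrow> bdd (\<lambda>x. \<Sum>i\<in>I. f i x)"
proof (induction I rule: finite_induct)
  case empty then show ?case unfolding bdd_def by (intro exI[of _ 0]) simp
next
  case (insert i I) then show ?case by (simp add: bdd_add)
qed

lemma opA_add:
  assumes "rw_kernel a" "bdd u" "bdd v"
  shows "opA a (\<lambda>x. u x + v x) x = opA a u x + opA a v x"
  using has_sum_add[OF opA_has_sum[OF assms(1,2)] opA_has_sum[OF assms(1,3)], of x]
    opA_has_sum[OF assms(1) bdd_add[OF assms(2,3)], of x]
  by (simp add: distrib_left has_sum_unique)

lemma opA_scale:
  shows "opA a (\<lambda>x. c * u x) x = c * opA a u x"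
  unfolding opA_reindex using infsum_cmult_right'[of c "\<lambda>w. a w * u (x - w)" UNIV]
  by (simp add: mult_ac)

lemma opA_sum:
  assumes "rw_kernel a" "finite I" "\<And>i. i \<in> I \<Longrightarrow> bdd (f i)"
  shows "opA a (\<lambda>x. \<Sum>i\<in>I. f i x) x = (\<Sum>i\<in>I. opA a (f i) x)"
  using assms(2,3)
proof (induction I rule: finite_induct)
  case empty then show ?case by (simp add: opA_def)
next
  case (insert i I)
  have "opA a (\<lambda>x. \<Sum>j\<in>insert i I. f j x) x = opA a (\<lambda>x. f i x + (\<Sum>j\<in>I. f j x)) x"
    using insert by simp
  also have "\<dots> = opA a (f i) x + opA a (\<lambda>x. \<Sum>j\<in>I. f j x) x"
    using opA_add[OF assms(1), of "f i" "\<lambda>x. \<Sum>j\<in>I. f j x"] insert bdd_sum[of I f] by simp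
  finally show ?case using insert by simp
qed

lemma split0:
  fixes f :: "int ^ 'd \<Rightarrow> real"
  assumes "((\<lambda>v. a v * f (x - v)) has_sum S) UNIV"
  shows "((\<lambda>v. (if v = 0 then 0 else a v) * f (x - v)) has_sum (S - a 0 * f x)) UNIV"
proof -
  have "((\<lambda>v. if v = 0 then - (a 0 * f x) else 0) has_sum (- (a 0 * f x))) UNIV"
    by (rule has_sum_finite_neutralI[where B="{0}"]) auto
  from has_sum_add[OF assms this]
  have "((\<lambda>v. a v * f (x - v) + (if v = 0 then - (a 0 * f x) else 0)) has_sum (S - a 0 * f x)) UNIV"
    by simp
  moreover have "a v * f (x - v) + (if v = 0 then - (a 0 * f x) else 0) = (if v = 0 then 0 else a v) * f (x - v)" for v
    by auto
  ultimately show ?thesis by simp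
qed

lemma h_has_sum:
  assumes "rw_kernel a"
  shows "((\<lambda>v. if v = 0 then 0 else a v) has_sum (- a 0)) UNIV"
  using split0[of a "\<lambda>_. 1" 0 0] kernel_summable(4)[OF assms] by simp

lemma h_nonneg: "rw_kernel a \<Longrightarrow> (if v = 0 then 0 else a v) \<ge> 0"
  unfolding rw_kernel_def by auto

lemma max_principle:
  fixes w :: "int ^ 'd \<Rightarrow> real"
  assumes ker: "rw_kernel a" and lam: "lam > 0" and b: "bdd w" and eq: "\<And>x. opA a w x = lam * w x"
  shows "w = (\<lambda>_. 0)"
proof -
  define c where "c = - a 0"
  have c: "c > 0" using ker unfolding rw_kernel_def c_def by auto
  define h where "h v = (if v = 0 then 0 else a v)" for v
  have bd: "bdd_above (range (\<lambda>x. \<bar>w x\<bar>))" using b unfolding bdd_def by (auto intro: bdd_aboveI2)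
  define M where "M = (SUP x. \<bar>w x\<bar>)"
  have wM: "\<bar>w x\<bar> \<le> M" for x unfolding M_def by (rule cSUP_upper[OF _ bd]) simp
  have key: "(lam + c) * \<bar>w x\<bar> \<le> c * M" for x
  proof -
    have s: "((\<lambda>v. h v * w (x - v)) has_sum (lam * w x - a 0 * w x)) UNIV"
      using split0[OF opA_has_sum[OF ker b, of x]] eq[of x] unfolding h_def by simp
    have hM: "((\<lambda>v. h v * M) has_sum (c * M)) UNIV"
      using has_sum_cmult_left[OF h_has_sum[OF ker], of M] unfolding h_def c_def by simp
    have "norm (lam * w x - a 0 * w x) \<le> c * M"
    proof (rule norm_infsum_le[OF s hM])
      fix v :: "int^'d"
      show "norm (h v * w (x - v)) \<le> h v * M"
        using h_nonneg[OF ker, of v] wM[of "x - v"] unfolding h_def[symmetric]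
        by (simp add: abs_mult mult_left_mono)
    qed
    then show ?thesis unfolding c_def using lam by (simp add: abs_mult algebra_simps)
  qed
  have "M \<le> c * M / (lam + c)"
    unfolding M_def
  proof (rule cSUP_least)
    fix x show "\<bar>w x\<bar> \<le> c * (SUP x. \<bar>w x\<bar>) / (lam + c)"
      using key[of x] lam c unfolding M_def by (simp add: field_simps mult.commute)
  qed simp
  then have "(lam + c) * M \<le> c * M" using lam c by (simp add: field_simps)
  then have "M * lam \<le> 0" by (simp add: algebra_simps)
  then have "M \<le> 0" using lam by (simp add: mult_le_0_iff)
  then show ?thesis using wM by (auto simp: fun_eq_iff) (metis abs_le_zero_iff order_trans)
qed

lemma gr_bdd: "rw_kernel a \<Longrightarrow> lam > 0 \<Longrightarrow> bdd (gr a lam y)"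
  unfolding bdd_def using gr_bound by blast

lemma opA_gr:
  assumes "rw_kernel a" "lam > 0"
  shows "opA a (gr a lam y) x = lam * gr a lam y x - (if x = y then 1 else 0)"
  using has_sum_unique[OF opA_has_sum[OF assms(1) gr_bdd[OF assms]] gr_resolvent[OF assms]] .

lemma gr_nonneg:
  fixes a :: "int ^ 'd \<Rightarrow> real"
  assumes ker: "rw_kernel a" and lam: "lam > 0"
  shows "gr a lam y x \<ge> 0"
proof -
  define g where "g = gr a lam y"
  define c where "c = - a 0"
  have c: "c > 0" using ker unfolding rw_kernel_def c_def by auto
  define h where "h v = (if v = 0 then 0 else a v)" for v
  have bd: "bdd_below (range g)"
  proof (rule bdd_belowI2)
    fix x
    have "\<bar>g x\<bar> \<le> 1 / lam" unfolding g_def by (rule gr_bound[OF ker lam])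
    then show "- (1 / lam) \<le> g x" by (simp add: abs_le_iff)
  qed
  define m where "m = (INF x. g x)"
  have gm: "m \<le> g x" for x unfolding m_def by (rule cINF_lower[OF bd]) simp
  have key: "(lam + c) * g x \<ge> c * m" for x
  proof -
    have s: "((\<lambda>v. h v * g (x - v)) has_sum (lam * g x - (if x = y then 1 else 0) - a 0 * g x)) UNIV"
      using split0[OF gr_resolvent[OF ker lam, of y x]] unfolding h_def g_def by simp
    have hm: "((\<lambda>v. h v * m) has_sum (c * m)) UNIV"
      using has_sum_cmult_left[OF h_has_sum[OF ker], of m] unfolding h_def c_def by simp
    have "c * m \<le> lam * g x - (if x = y then 1 else 0) - a 0 * g x"
    proof (rule has_sum_mono[OF hm s])
      fix v :: "int^'d"
      show "h v * m \<le> h v * g (x - v)"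
        using h_nonneg[OF ker, of v] gm[of "x - v"] unfolding h_def by (intro mult_left_mono) auto
    qed
    then show ?thesis unfolding c_def by (auto simp: algebra_simps split: if_splits)
  qed
  have "c * m / (lam + c) \<le> m"
    unfolding m_def
  proof (rule cINF_greatest)
    fix x show "c * (INF x. g x) / (lam + c) \<le> g x"
      using key[of x] lam c unfolding m_def by (simp add: field_simps mult.commute)
  qed simp
  then have "c * m \<le> (lam + c) * m" using lam c by (simp add: field_simps)
  then have "0 \<le> lam * m" by (simp add: algebra_simps)
  then have "m \<ge> 0" using lam by (simp add: zero_le_mult_iff)
  then show ?thesis using gm[of x] unfolding g_def by simp
qed




lemma gr_zero_prop:
  fixes a :: "int ^ 'd \<Rightarrow> real"
  assumes ker: "rw_kernel a" and lam: "lam > 0" and z: "gr a lam y x0 = 0"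
  shows "x0 \<noteq> y" "a v \<noteq> 0 \<Longrightarrow> gr a lam y (x0 - v) = 0"
proof -
  define g where "g = gr a lam y"
  define h where "h v = (if v = 0 then 0 else a v)" for v
  have s: "((\<lambda>v. h v * g (x0 - v)) has_sum (lam * g x0 - (if x0 = y then 1 else 0) - a 0 * g x0)) UNIV"
    using split0[OF gr_resolvent[OF ker lam, of y x0]] unfolding h_def g_def by simp
  then have s': "((\<lambda>v. h v * g (x0 - v)) has_sum (- (if x0 = y then 1 else 0))) UNIV"
    using z unfolding g_def by simp
  have nn: "h v * g (x0 - v) \<ge> 0" for v
    using h_nonneg[OF ker, of v] gr_nonneg[OF ker lam, of y "x0 - v"] unfolding h_def g_def by simp
  have "- (if x0 = y then 1 else 0) \<ge> (0::real)" by (rule has_sum_nonneg[OF s' nn])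
  then show xy: "x0 \<noteq> y" by (auto split: if_splits)
  assume av: "a v \<noteq> 0"
  have single: "((\<lambda>u. if u = v then h v * g (x0 - v) else 0) has_sum (h v * g (x0 - v))) UNIV"
    by (rule has_sum_finite_neutralI[where B="{v}"]) auto
  have "h v * g (x0 - v) \<le> - (if x0 = y then 1 else 0)"
    by (rule has_sum_mono[OF single s']) (use nn in auto)
  then have "h v * g (x0 - v) = 0" using xy nn[of v] by simp
  show "gr a lam y (x0 - v) = 0"
  proof (cases "v = 0")
    case True then show ?thesis using z by simp
  next
    case False
    then have "h v > 0" using av ker unfolding h_def rw_kernel_def by force
    then show ?thesis using \<open>h v * g (x0 - v) = 0\<close> unfolding g_def by simp
  qed
qed

lemma gr_pos:
  fixes a :: "int ^ 'd \<Rightarrow> real"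
  assumes ker: "rw_kernel a" and lam: "lam > 0"
  shows "gr a lam y x > 0"
proof (rule ccontr)
  assume "\<not> gr a lam y x > 0"
  then have z: "gr a lam y x = 0" using gr_nonneg[OF ker lam, of y x] by simp
  have ind: "(\<forall>w\<in>set zs. a w \<noteq> 0) \<longrightarrow> gr a lam y (x - sum_list zs) = 0" for zs
  proof (induction zs)
    case Nil then show ?case using z by simp
  next
    case (Cons w zs)
    show ?case
    proof
      assume A: "\<forall>u\<in>set (w # zs). a u \<noteq> 0"
      then have "gr a lam y (x - sum_list zs) = 0" using Cons by simp
      then have "gr a lam y ((x - sum_list zs) - w) = 0"
        using gr_zero_prop(2)[OF ker lam] A by simp
      then show "gr a lam y (x - sum_list (w # zs)) = 0" by (simp add: algebra_simps)
    qed
  qed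
  obtain zs where zs: "\<forall>w\<in>set zs. a w \<noteq> 0" "sum_list zs = x - y"
    using ker unfolding rw_kernel_def by blast
  have "gr a lam y y = 0" using ind[of zs] zs by simp
  then show False using gr_zero_prop(1)[OF ker lam] by blast
qed

lemma l2_bdd:
  assumes "in_l2 u" shows "bdd u"
proof -
  define T where "T = (\<Sum>\<^sub>\<infinity>x. (u x)\<^sup>2)"
  have "\<bar>u x\<bar> \<le> sqrt T" for x
  proof -
    have "(u x)\<^sup>2 = infsum (\<lambda>x. (u x)\<^sup>2) {x}" by simp
    also have "\<dots> \<le> T" unfolding T_def
      by (rule infsum_mono_neutral) (use assms in \<open>auto simp: in_l2_def\<close>)
    finally show ?thesis using real_sqrt_le_mono by fastforce
  qed
  then show ?thesis unfolding bdd_def by blast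
qed

lemma l2_add:
  assumes "in_l2 u" "in_l2 v" shows "in_l2 (\<lambda>x. u x + v x)"
proof -
  have "(\<lambda>x. 2 * (u x)\<^sup>2 + 2 * (v x)\<^sup>2) summable_on UNIV"
    using assms unfolding in_l2_def by (intro summable_on_add summable_on_cmult_right)
  then show ?thesis unfolding in_l2_def
  proof (rule summable_on_comparison_test)
    fix x
    have "(u x + v x)\<^sup>2 + (u x - v x)\<^sup>2 = 2 * (u x)\<^sup>2 + 2 * (v x)\<^sup>2"
      by (simp add: power2_eq_square algebra_simps)
    moreover have "(u x - v x)\<^sup>2 \<ge> 0" by simp
    ultimately show "(u x + v x)\<^sup>2 \<le> 2 * (u x)\<^sup>2 + 2 * (v x)\<^sup>2" by linarith
    show "0 \<le> (u x + v x)\<^sup>2" by simp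
  qed
qed

lemma l2_scale:
  assumes "in_l2 u" shows "in_l2 (\<lambda>x. c * u x)"
  using summable_on_cmult_right[of "\<lambda>x. (u x)\<^sup>2" UNIV "c\<^sup>2"] assms
  unfolding in_l2_def by (simp add: power_mult_distrib)

lemma l2_sum:
  "finite I \<Longrightarrow> (\<And>i. i \<in> I \<Longrightarrow> in_l2 (f i)) \<Longrightarrow> in_l2 (\<lambda>x. \<Sum>i\<in>I. f i x)"
proof (induction I rule: finite_induct)
  case empty then show ?case by (simp add: in_l2_def)
next
  case (insert i I) then show ?case by (simp add: l2_add)
qed

lemma opA_comb:
  fixes a :: "int ^ 'd \<Rightarrow> real" and xs :: "'n::finite \<Rightarrow> int ^ 'd"
  assumes ker: "rw_kernel a" and lam: "lam > 0"
  shows "opA a (\<lambda>x. \<Sum>j\<in>UNIV. p j * gr a lam (xs j) x) x =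
     lam * (\<Sum>j\<in>UNIV. p j * gr a lam (xs j) x) - (\<Sum>j\<in>UNIV. if x = xs j then p j else 0)"
proof -
  have "opA a (\<lambda>x. \<Sum>j\<in>UNIV. p j * gr a lam (xs j) x) x = (\<Sum>j\<in>UNIV. opA a (\<lambda>x. p j * gr a lam (xs j) x) x)"
    by (rule opA_sum[OF ker]) (auto intro!: bdd_scale gr_bdd[OF ker lam])
  also have "\<dots> = (\<Sum>j\<in>UNIV. p j * (lam * gr a lam (xs j) x - (if x = xs j then 1 else 0)))"
    by (simp add: opA_scale opA_gr[OF ker lam])
  also have "\<dots> = (\<Sum>j\<in>UNIV. lam * (p j * gr a lam (xs j) x) - (if x = xs j then p j else 0))"
    by (intro sum.cong refl) (simp add: algebra_simps)
  also have "\<dots> = lam * (\<Sum>j\<in>UNIV. p j * gr a lam (xs j) x) - (\<Sum>j\<in>UNIV. if x = xs j then p j else 0)"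
    by (simp only: sum_subtractf sum_distrib_left)
  finally show ?thesis .
qed




theorem lemma1:
  fixes a :: "int ^ 'd \<Rightarrow> real"
    and xs :: "'n::finite \<Rightarrow> int ^ 'd"
    and \<beta> lam :: real
  assumes "rw_kernel a"
    and "inj xs"
    and "lam > 0"
  shows "(is_l2_eigenvalue (opH a \<beta> xs) lam \<longleftrightarrow>
           (\<exists>\<gamma>. mat_eigenvalue (Gamma_mat a lam xs) \<gamma> \<and> \<gamma> * complex_of_real \<beta> = 1))
         \<and> (\<forall>i j. Im (Gamma_mat a lam xs $ i $ j) = 0 \<and> Re (Gamma_mat a lam xs $ i $ j) > 0)"
proof -
  note ker = assms(1) and lam = assms(3)
  have Ge: "Gamma_mat a lam xs $ i $ j = complex_of_real (gr a lam (xs j) (xs i))" for i j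
    by (simp add: Gamma_mat_def green_gr[OF ker lam])
  have part2: "\<forall>i j. Im (Gamma_mat a lam xs $ i $ j) = 0 \<and> Re (Gamma_mat a lam xs $ i $ j) > 0"
    using gr_pos[OF ker lam] by (simp add: Ge)
  have part1: "is_l2_eigenvalue (opH a \<beta> xs) lam \<longleftrightarrow>
           (\<exists>\<gamma>. mat_eigenvalue (Gamma_mat a lam xs) \<gamma> \<and> \<gamma> * complex_of_real \<beta> = 1)"
  proof
    assume "is_l2_eigenvalue (opH a \<beta> xs) lam"
    then obtain u where u: "in_l2 u" "u \<noteq> (\<lambda>_. 0)" "\<And>x. opH a \<beta> xs u x = lam * u x"
      unfolding is_l2_eigenvalue_def by blast
    define v where "v i = u (xs i)" for i
    define S where "S x = (\<Sum>j\<in>UNIV. v j * gr a lam (xs j) x)" for x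
    have ub: "bdd u" by (rule l2_bdd[OF u(1)])
    have Sb: "bdd S" unfolding S_def
      by (rule bdd_sum) (auto intro!: bdd_scale gr_bdd[OF ker lam])
    have opAu: "opA a u x = lam * u x - \<beta> * (\<Sum>j\<in>UNIV. if x = xs j then v j else 0)" for x
      using u(3)[of x] unfolding opH_def v_def by (simp add: algebra_simps if_distrib cong: if_cong)
    have opAS: "opA a S x = lam * S x - (\<Sum>j\<in>UNIV. if x = xs j then v j else 0)" for x
      unfolding S_def by (rule opA_comb[OF ker lam])
    define w where "w x = u x + (- \<beta>) * S x" for x
    have wb: "bdd w" unfolding w_def by (intro bdd_add ub bdd_scale Sb)
    have "opA a w x = lam * w x" for x
    proof -
      have "opA a w x = opA a u x + opA a (\<lambda>x. (- \<beta>) * S x) x"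
        unfolding w_def by (rule opA_add[OF ker ub bdd_scale[OF Sb]])
      also have "\<dots> = opA a u x + (- \<beta>) * opA a S x" by (simp only: opA_scale)
      also have "\<dots> = (lam * u x - \<beta> * (\<Sum>j\<in>UNIV. if x = xs j then v j else 0))
          - (\<beta> * (lam * S x) - \<beta> * (\<Sum>j\<in>UNIV. if x = xs j then v j else 0))"
        by (simp only: opAu opAS right_diff_distrib mult_minus_left diff_conv_add_uminus distrib_left mult_minus_right)
      also have "\<dots> = lam * w x" unfolding w_def by (simp add: algebra_simps)
      finally show ?thesis .
    qed
    then have w0: "w = (\<lambda>_. 0)" by (intro max_principle[OF ker lam wb])
    have uS: "u x = \<beta> * S x" for x
      using fun_cong[OF w0, of x] unfolding w_def by simp
    have vnz: "\<exists>i. v i \<noteq> 0"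
    proof (rule ccontr)
      assume "\<not> (\<exists>i. v i \<noteq> 0)"
      then have "S x = 0" for x unfolding S_def by simp
      then have "u = (\<lambda>_. 0)" using uS by auto
      then show False using u(2) by simp
    qed
    have b0: "\<beta> \<noteq> 0"
    proof
      assume "\<beta> = 0"
      then have "u = (\<lambda>_. 0)" using uS by auto
      then show False using u(2) by simp
    qed
    have veq: "(\<Sum>i\<in>UNIV. gr a lam (xs i) (xs j) * v i) = v j / \<beta>" for j
      using uS[of "xs j"] b0 unfolding v_def[of j] S_def by (simp add: mult_ac v_def)
    show "\<exists>\<gamma>. mat_eigenvalue (Gamma_mat a lam xs) \<gamma> \<and> \<gamma> * complex_of_real \<beta> = 1"
    proof (intro exI conjI)
      show "complex_of_real (1 / \<beta>) * complex_of_real \<beta> = 1"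
        using b0 by (simp flip: of_real_mult)
      show "mat_eigenvalue (Gamma_mat a lam xs) (complex_of_real (1 / \<beta>))"
        unfolding mat_eigenvalue_def
      proof (intro exI conjI)
        show "(\<chi> i. complex_of_real (v i)) \<noteq> 0" using vnz by (auto simp: vec_eq_iff)
        show "Gamma_mat a lam xs *v (\<chi> i. complex_of_real (v i)) = complex_of_real (1 / \<beta>) *s (\<chi> i. complex_of_real (v i))"
        proof (subst vec_eq_iff, intro allI)
          fix j
          have "(Gamma_mat a lam xs *v (\<chi> i. complex_of_real (v i))) $ j
              = (\<Sum>i\<in>UNIV. complex_of_real (gr a lam (xs i) (xs j) * v i))"
            by (simp add: matrix_vector_mult_def Ge)
          also have "\<dots> = complex_of_real (v j / \<beta>)"
            by (simp only: of_real_sum[symmetric] veq)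
          also have "\<dots> = (complex_of_real (1 / \<beta>) *s (\<chi> i. complex_of_real (v i))) $ j"
            by simp
          finally show "(Gamma_mat a lam xs *v (\<chi> i. complex_of_real (v i))) $ j =
              (complex_of_real (1 / \<beta>) *s (\<chi> i. complex_of_real (v i))) $ j" .
        qed
      qed
    qed
  next
    assume "\<exists>\<gamma>. mat_eigenvalue (Gamma_mat a lam xs) \<gamma> \<and> \<gamma> * complex_of_real \<beta> = 1"
    then obtain \<gamma> vc where vc: "vc \<noteq> 0" "Gamma_mat a lam xs *v vc = \<gamma> *s vc" and g1: "\<gamma> * complex_of_real \<beta> = 1"
      unfolding mat_eigenvalue_def by blast
    have b0: "\<beta> \<noteq> 0" using g1 by auto
    have geq: "\<gamma> = complex_of_real (1 / \<beta>)"
      using g1 b0 by (simp add: field_simps)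
    define R where "R i j = gr a lam (xs j) (xs i)" for i j
    have eqs: "(\<Sum>j\<in>UNIV. complex_of_real (R i j) * vc $ j) = complex_of_real (1 / \<beta>) * vc $ i" for i
      using arg_cong[OF vc(2), of "\<lambda>z. z $ i"] unfolding geq
      by (simp add: matrix_vector_mult_def Ge R_def)
    have ReEq: "(\<Sum>j\<in>UNIV. R i j * Re (vc $ j)) = Re (vc $ i) / \<beta>" for i
      using arg_cong[OF eqs[of i], of Re] by (simp add: Re_sum)
    have ImEq: "(\<Sum>j\<in>UNIV. R i j * Im (vc $ j)) = Im (vc $ i) / \<beta>" for i
      using arg_cong[OF eqs[of i], of Im] by (simp add: Im_sum)
    obtain i0 where i0: "vc $ i0 \<noteq> 0" using vc(1) by (auto simp: vec_eq_iff)
    obtain p where p: "\<And>i. (\<Sum>j\<in>UNIV. R i j * p j) = p i / \<beta>" and pi0: "p i0 \<noteq> 0"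
    proof (cases "Re (vc $ i0) = 0")
      case True
      then have "Im (vc $ i0) \<noteq> 0" using i0 by (simp add: complex_eq_iff)
      then show ?thesis using that[of "\<lambda>j. Im (vc $ j)"] ImEq by blast
    next
      case False
      then show ?thesis using that[of "\<lambda>j. Re (vc $ j)"] ReEq by blast
    qed
    define u where "u x = \<beta> * (\<Sum>j\<in>UNIV. p j * gr a lam (xs j) x)" for x
    have ul2: "in_l2 u" unfolding u_def
      by (intro l2_scale l2_sum) (auto intro!: l2_scale gr_l2[OF ker lam])
    have uxs: "u (xs i) = p i" for i
    proof -
      have "u (xs i) = \<beta> * (\<Sum>j\<in>UNIV. R i j * p j)" unfolding u_def R_def by (simp add: mult_ac)
      also have "\<dots> = p i" using p[of i] b0 by simp
      finally show ?thesis .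
    qed
    show "is_l2_eigenvalue (opH a \<beta> xs) lam"
      unfolding is_l2_eigenvalue_def
    proof (intro exI conjI allI)
      show "in_l2 u" by (rule ul2)
      show "u \<noteq> (\<lambda>_. 0)"
      proof
        assume "u = (\<lambda>_. 0)"
        then have "u (xs i0) = 0" by simp
        then show False using uxs[of i0] pi0 by simp
      qed
      fix x
      have "opA a u x = \<beta> * opA a (\<lambda>x. \<Sum>j\<in>UNIV. p j * gr a lam (xs j) x) x"
        unfolding u_def by (rule opA_scale)
      also have "\<dots> = \<beta> * (lam * (\<Sum>j\<in>UNIV. p j * gr a lam (xs j) x) - (\<Sum>j\<in>UNIV. if x = xs j then p j else 0))"
        by (simp only: opA_comb[OF ker lam])
      finally have "opA a u x = lam * u x - \<beta> * (\<Sum>j\<in>UNIV. if x = xs j then p j else 0)"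
        unfolding u_def by (simp add: algebra_simps)
      moreover have "(\<Sum>i\<in>UNIV. (if x = xs i then u (xs i) else 0)) = (\<Sum>j\<in>UNIV. if x = xs j then p j else 0)"
        using uxs by (intro sum.cong refl) presburger
      ultimately show "opH a \<beta> xs u x = lam * u x"
        unfolding opH_def by simp
    qed
  qed
  show ?thesis using part1 part2 by blast
qed


end
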